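(* Let $n_i,m_i$ be positive integers and let $A_i\in\mathbb{R}^{n_i\times n_i}$, $B_i\in\mathbb{R}^{n_i\times m_i}$, $F_i\in\mathbb{R}^{n_i\times m_i}$, $C_i\in\mathbb{R}^{m_i\times n_i}$. Consider the discrete-time subsystem with state $x_i\in\mathbb{R}^{n_i}$, control input $u_i\in\mathbb{R}^{m_i}$ and exogenous (coupling) input $v_i\in\mathbb{R}^{m_i}$, $$x_i^+=A_ix_i+B_iu_i+F_iv_i,\qquad y_i=C_ix_i,$$ together with the virtual output $z_i=y_i+D_iv_i=C_ix_i+D_iv_i$, where $D_i\in\mathbb{R}^{m_i\times m_i}$. Suppose there exist matrices $S_i\in\mathbb{R}^{m_i\times m_i}$, $G_i\in\mathbb{R}^{m_i\times n_i}$ and symmetric positive definite matrices $E_i\in\mathbb{R}^{n_i\times n_i}$, $H_i\in\mathbb{R}^{n_i\times n_i}$ such that $$\begin{bmatrix} E_i & \tfrac12 E_iC_i^\top & (A_iE_i+B_iG_i)^\top & E_i\\ \tfrac12 C_iE_i & \tfrac12 S_i+\tfrac12 S_i^\top & F_i^\top & 0\\ A_iE_i+B_iG_i & F_i & E_i & 0\\ E_i & 0 & 0 & H_i \end{bmatrix}\succeq 0 .$$ Then, with $K_i=G_iE_i^{-1}$ and $D_i=S_i$, the closed-loop subsystem under the control law $u_i=K_ix_i$, i.e. $x_i^+=(A_i+B_iK_i)x_i+F_iv_i$, $z_i=C_ix_i+D_iv_i$, is strictly passive with respect to the input-output pair $(v_i,z_i)$; specifically, with $P_i=E_i^{-1}$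 and $\Gamma_i=H_i^{-1}$ (both positive definite), for all $x_i\in\mathbb{R}^{n_i}$ and $v_i\in\mathbb{R}^{m_i}$, $$(x_i^+)^\top P_ix_i^+-x_i^\top P_ix_i\le v_i^\top z_i-x_i^\top\Gamma_ix_i .$$
   Context: A discrete-time system $x^+=f(x,v)$ with output $z=h(x,v)$ is called strictly passive with respect to the input-output pair $(v,z)$ if there exist a continuous storage function $V:\mathbb{R}^n\to\mathbb{R}_{\ge0}$ with $V(0)=0$ and a dissipation rate $\gamma:\mathbb{R}^n\to\mathbb{R}_{\ge 0}$ with $\gamma(0)=0$ and $\gamma(x)>0$ for $x\neq0$, such that $V(x^+)-V(x)\le z^\top v-\gamma(x)$ for all $x$ and $v$. The notation $M\succeq0$ means the symmetric matrix $M$ is positive semidefinite. *)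

theory Defs
  imports "HOL-Analysis.Analysis"
begin

definition psd :: "real^'k^'k \<Rightarrow> bool" where
  "psd M \<longleftrightarrow> transpose M = M \<and> (\<forall>w. 0 \<le> w \<bullet> (M *v w))"

definition pd :: "real^'k^'k \<Rightarrow> bool" where
  "pd M \<longleftrightarrow> transpose M = M \<and> (\<forall>w. w \<noteq> 0 \<longrightarrow> 0 < w \<bullet> (M *v w))"

definition lmi_block ::
  "real^'n^'n \<Rightarrow> real^'m^'n \<Rightarrow> real^'m^'n \<Rightarrow> real^'n^'m \<Rightarrow> real^'m^'m \<Rightarrow> real^'n^'m
   \<Rightarrow> real^'n^'n \<Rightarrow> real^'n^'n \<Rightarrow> real^('n + 'm + 'n + 'n)^('n + 'm + 'n + 'n)" where
  "lmi_block A B F C S G E H =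
    (let M = A ** E + B ** G in
     \<chi> i j. (case i of
        Inl a \<Rightarrow> (case j of
            Inl b \<Rightarrow> E $ a $ b
          | Inr (Inl b) \<Rightarrow> ((1/2) *\<^sub>R (E ** transpose C)) $ a $ b
          | Inr (Inr (Inl b)) \<Rightarrow> transpose M $ a $ b
          | Inr (Inr (Inr b)) \<Rightarrow> E $ a $ b)
      | Inr (Inl a) \<Rightarrow> (case j of
            Inl b \<Rightarrow> ((1/2) *\<^sub>R (C ** E)) $ a $ b
          | Inr (Inl b) \<Rightarrow> ((1/2) *\<^sub>R S + (1/2) *\<^sub>R transpose S) $ a $ b
          | Inr (Inr (Inl b)) \<Rightarrow> transpose F $ a $ b
          | Inr (Inr (Inr b)) \<Rightarrow> 0)
      | Inr (Inr (Inl a)) \<Rightarrow> (case j of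
            Inl b \<Rightarrow> M $ a $ b
          | Inr (Inl b) \<Rightarrow> F $ a $ b
          | Inr (Inr (Inl b)) \<Rightarrow> E $ a $ b
          | Inr (Inr (Inr b)) \<Rightarrow> 0)
      | Inr (Inr (Inr a)) \<Rightarrow> (case j of
            Inl b \<Rightarrow> E $ a $ b
          | Inr (Inl b) \<Rightarrow> 0
          | Inr (Inr (Inl b)) \<Rightarrow> 0
          | Inr (Inr (Inr b)) \<Rightarrow> H $ a $ b)))"

end

theory Submission
  imports Defs
begin

lemma sum_UNIV_Plus:
  "sum f (UNIV :: ('a::finite + 'b::finite) set) = sum (\<lambda>a. f (Inl a)) UNIV + sum (\<lambda>b. f (Inr b)) UNIV"
proof -
  have "sum f (UNIV :: ('a + 'b) set) = sum f (Inl ` UNIV) + sum f (Inr ` UNIV)"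
    by (subst UNIV_sum, rule sum.union_disjoint) auto
  also have "\<dots> = sum (\<lambda>a. f (Inl a)) UNIV + sum (\<lambda>b. f (Inr b)) UNIV"
    by (simp add: sum.reindex)
  finally show ?thesis .
qed

lemma lmi_quad:
  fixes A :: "real^'n^'n" and B F :: "real^'m^'n" and C :: "real^'n^'m"
    and S :: "real^'m^'m" and G :: "real^'n^'m" and E H :: "real^'n^'n"
    and u1 u3 u4 :: "real^'n" and u2 :: "real^'m"
  defines "w \<equiv> (\<chi> i. case i of Inl a \<Rightarrow> u1$a | Inr (Inl b) \<Rightarrow> u2$b
      | Inr (Inr (Inl c)) \<Rightarrow> u3$c | Inr (Inr (Inr d)) \<Rightarrow> u4$d) :: real^('n + 'm + 'n + 'n)"
  shows "w \<bullet> (lmi_block A B F C S G E H *v w) =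
     u1 \<bullet> (E *v u1 + ((1/2) *\<^sub>R (E ** transpose C)) *v u2 + transpose (A ** E + B ** G) *v u3 + E *v u4)
   + u2 \<bullet> (((1/2) *\<^sub>R (C ** E)) *v u1 + ((1/2) *\<^sub>R S + (1/2) *\<^sub>R transpose S) *v u2 + transpose F *v u3)
   + u3 \<bullet> ((A ** E + B ** G) *v u1 + F *v u2 + E *v u3)
   + u4 \<bullet> (E *v u1 + H *v u4)"
  unfolding w_def lmi_block_def Let_def
  by (simp add: inner_vec_def matrix_vector_mult_def sum_UNIV_Plus sum.distrib algebra_simps)


lemma inner_transp: "(a::real^'n) \<bullet> ((Y::real^'m^'n) *v b) = b \<bullet> (transpose Y *v a)"
  by (metis dot_lmul_matrix inner_commute transpose_matrix_vector)

lemma pd_inv: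
  fixes X :: "real^'n^'n"
  assumes "pd X"
  shows "X ** matrix_inv X = mat 1 \<and> matrix_inv X ** X = mat 1 \<and> pd (matrix_inv X)"
proof -
  have sym: "transpose X = X" using assms by (simp add: pd_def)
  have "\<forall>w. X *v w = 0 \<longrightarrow> w = 0"
  proof (intro allI impI)
    fix w assume "X *v w = 0"
    then have "w \<bullet> (X *v w) = 0" by simp
    then show "w = 0" using assms unfolding pd_def by (metis less_irrefl)
  qed
  then obtain Bm where "Bm ** X = mat 1" using matrix_left_invertible_ker by blast
  then have "invertible X" using invertible_left_inverse by blast
  then have inv: "X ** matrix_inv X = mat 1 \<and> matrix_inv X ** X = mat 1"
    unfolding invertible_def matrix_inv_def by (rule someI_ex)
  let ?P = "matrix_inv X"
  have tP: "transpose ?P = ?P"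
  proof -
    have "transpose ?P = transpose ?P ** (X ** ?P)" using inv by simp
    also have "\<dots> = (transpose ?P ** X) ** ?P" by (simp add: matrix_mul_assoc)
    also have "transpose ?P ** X = transpose (X ** ?P)" using sym by (simp add: matrix_transpose_mul)
    also have "\<dots> = mat 1" using inv by (simp add: transpose_mat)
    finally show ?thesis by simp
  qed
  have "\<forall>w. w \<noteq> 0 \<longrightarrow> 0 < w \<bullet> (?P *v w)"
  proof (intro allI impI)
    fix w :: "real^'n" assume w: "w \<noteq> 0"
    have e: "X *v (?P *v w) = w" using inv by (simp add: matrix_vector_mul_assoc)
    then have "?P *v w \<noteq> 0" using w by auto
    then have "0 < (?P *v w) \<bullet> (X *v (?P *v w))" using assms unfolding pd_def by blast
    also have "\<dots> = w \<bullet> (?P *v w)" using e by (simp add: inner_commute)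
    finally show "0 < w \<bullet> (?P *v w)" .
  qed
  with tP inv show ?thesis unfolding pd_def by blast
qed

lemma matrix_add_rdistrib': "((A::real^'n^'m) + B) ** (C::real^'p^'n) = A ** C + B ** C"
  by (vector matrix_matrix_mult_def sum.distrib[symmetric] field_simps)

lemma mvm_neg [simp]: "(A::real^'n^'m) *v (- x) = - (A *v x)"
  by (simp add: matrix_vector_mult_def vec_eq_iff sum_negf)

theorem lemma1:
  fixes A :: "real^'n^'n" and B F :: "real^'m^'n" and C :: "real^'n^'m"
    and S :: "real^'m^'m" and G :: "real^'n^'m" and E H :: "real^'n^'n"
  assumes E_pd: "pd E" and H_pd: "pd H"
    and LMI: "psd (lmi_block A B F C S G E H)"
  defines "K \<equiv> G ** matrix_inv E"
    and "D \<equiv> S"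
    and "P \<equiv> matrix_inv E"
    and "\<Gamma> \<equiv> matrix_inv H"
  shows "pd P \<and> pd \<Gamma> \<and>
    (\<forall>(x :: real^'n) (v :: real^'m).
       let xp = (A + B ** K) *v x + F *v v;
           z = C *v x + D *v v
       in xp \<bullet> (P *v xp) - x \<bullet> (P *v x) \<le> v \<bullet> z - x \<bullet> (\<Gamma> *v x))"
proof -
  have iE: "E ** P = mat 1" "P ** E = mat 1" "pd P" using pd_inv[OF E_pd] unfolding P_def by auto
  have iH: "H ** \<Gamma> = mat 1" "pd \<Gamma>" using pd_inv[OF H_pd] unfolding \<Gamma>_def by auto
  have tE: "transpose E = E" using E_pd by (simp add: pd_def)
  have tP: "transpose P = P" using iE by (simp add: pd_def)
  have tG: "transpose \<Gamma> = \<Gamma>" using iH by (simp add: pd_def)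
  have EP: "E *v (P *v y) = y" for y using iE by (simp add: matrix_vector_mul_assoc)
  have HG: "H *v (\<Gamma> *v y) = y" for y using iH by (simp add: matrix_vector_mul_assoc)
  define M where "M = A ** E + B ** G"
  have MP: "M ** P = A + B ** K"
    unfolding M_def K_def P_def[symmetric]
    using iE by (simp add: matrix_add_rdistrib' matrix_mul_assoc[symmetric])
  have main: "xp \<bullet> (P *v xp) - x \<bullet> (P *v x) \<le> v \<bullet> (C *v x + S *v v) - x \<bullet> (\<Gamma> *v x)"
    if xp_def: "xp = (A + B ** K) *v x + F *v v" for x v xp
  proof -
    define u1 where "u1 = P *v x"
    define u3 where "u3 = - (P *v xp)"
    define u4 where "u4 = - (\<Gamma> *v x)"
    have Mu1: "M *v u1 = xp - F *v v"
      unfolding u1_def using MP xp_def by (simp add: matrix_vector_mul_assoc)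
    have y3: "M *v u1 + F *v v + E *v u3 = 0"
      using Mu1 EP unfolding u3_def by (simp add: mvm_neg)
    have y4: "E *v u1 + H *v u4 = 0"
      using EP HG unfolding u1_def u4_def by (simp add: mvm_neg)
    have q: "0 \<le> u1 \<bullet> (E *v u1 + ((1/2) *\<^sub>R (E ** transpose C)) *v v + transpose M *v u3 + E *v u4)
   + v \<bullet> (((1/2) *\<^sub>R (C ** E)) *v u1 + ((1/2) *\<^sub>R S + (1/2) *\<^sub>R transpose S) *v v + transpose F *v u3)
   + u3 \<bullet> (M *v u1 + F *v v + E *v u3)
   + u4 \<bullet> (E *v u1 + H *v u4)"
      using LMI lmi_quad[of u1 v u3 u4 A B F C S G E H] unfolding psd_def M_def by metis
    have a1: "u1 \<bullet> (E *v u1) = x \<bullet> (P *v x)"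
      unfolding u1_def by (simp add: EP inner_commute)
    have a2: "u1 \<bullet> (((1/2) *\<^sub>R (E ** transpose C)) *v v) = (1/2) * (v \<bullet> (C *v x))"
    proof -
      have "u1 \<bullet> (((1/2) *\<^sub>R (E ** transpose C)) *v v) = (1/2) * (u1 \<bullet> (E *v (transpose C *v v)))"
        by (simp only: scaleR_matrix_vector_assoc[symmetric] matrix_vector_mul_assoc[symmetric] inner_scaleR_right)
      also have "u1 \<bullet> (E *v (transpose C *v v)) = (transpose C *v v) \<bullet> x"
        by (subst inner_transp) (simp only: tE u1_def EP)
      also have "\<dots> = v \<bullet> (C *v x)" by (metis inner_commute inner_transp transpose_transpose)
      finally show ?thesis .
    qed
    have a3: "u1 \<bullet> (transpose M *v u3) = - ((xp - F *v v) \<bullet> (P *v xp))"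
      by (subst inner_transp) (simp add: Mu1 u3_def inner_commute)
    have a4: "u1 \<bullet> (E *v u4) = - (x \<bullet> (\<Gamma> *v x))"
      by (subst inner_transp) (simp add: tE u1_def u4_def EP inner_commute)
    have b1: "v \<bullet> (((1/2) *\<^sub>R (C ** E)) *v u1) = (1/2) * (v \<bullet> (C *v x))"
      by (simp add: matrix_vector_mul_assoc[symmetric] scaleR_matrix_vector_assoc[symmetric] u1_def EP)
    have b2: "v \<bullet> (((1/2) *\<^sub>R S + (1/2) *\<^sub>R transpose S) *v v) = v \<bullet> (S *v v)"
    proof -
      have "v \<bullet> (transpose S *v v) = v \<bullet> (S *v v)" by (subst inner_transp) simp
      then show ?thesis
        by (simp add: matrix_vector_mult_add_rdistrib scaleR_matrix_vector_assoc[symmetric] inner_add_right)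
    qed
    have b3: "v \<bullet> (transpose F *v u3) = - ((F *v v) \<bullet> (P *v xp))"
      by (subst inner_transp) (simp add: u3_def inner_commute)
    have "0 \<le> x \<bullet> (P *v x) + v \<bullet> (C *v x) - ((xp - F *v v) \<bullet> (P *v xp)) - x \<bullet> (\<Gamma> *v x)
              + v \<bullet> (S *v v) - ((F *v v) \<bullet> (P *v xp))"
      using q y3 y4 a1 a2 a3 a4 b1 b2 b3 by (simp add: inner_add_right)
    then show ?thesis by (simp add: inner_add_right inner_diff_left)
  qed
  show ?thesis using iE iH main unfolding D_def Let_def by auto
qed
end
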